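(* For any two ${\cal X}_5$ formulas $\alpha$ and $\beta$: $\alpha$ and $\beta$ are strongly equivalent on substitutions if and only if $\alpha\Leftrightarrow\beta$ is valid in ${\cal X}_5$.
   Context: Fix a set $\mathit{At}$ of atoms. An explicit literal is $p$ or $\sim p$ for $p\in\mathit{At}$; a set of explicit literals is consistent if it never contains both $p$ and $\sim p$. Formulas: $\varphi ::= p\mid\bot\mid\varphi\wedge\varphi\mid\varphi\vee\varphi\mid\varphi\to\varphi\mid\sim\varphi$; abbreviations $\neg\varphi:=\varphi\to\bot$, $\top:=\neg\bot$, $\varphi\leftrightarrow\psi:=(\varphi\to\psi)\wedge(\psi\to\varphi)$, $\varphi\Leftrightarrow\psi:=(\varphi\leftrightarrow\psi)\wedge(\sim\varphi\leftrightarrow\sim\psi)$. A theory is a set of formulas. $\varphi[\alpha/p]$ denotes the result of replacing every occurrence of atom $p$ in $\varphi$ by $\alpha$. An ${\cal X}_5$-interpretation is a pair $\langle H,T\rangle$ of consistent sets of explicit literals with $H\subseteq T$. Satisfaction $\models$ and falsification $=\!\!|\;$: $\langle H,T\rangle\not\models\bot$, $\langle H,T\rangle=\!\!|\;\bot$; $\models p$ iff $p\in H$, $=\!\!|\;p$ iff $\sim p\in H$; $\models\varphi\wedge\psi$ iff both satisfied, $=\!\!|\;\varphi\wedge\psi$ iff at least one falsified; $\models\varphi\vee\psi$ iff at least one satisfied, $=\!\!|\;\varphi\vee\psi$ iff both falsified; $\models\sim\varphi$ iff $=\!\!|\;\varphi$, $=\!\!|\;\sim\varphi$ iff $\models\varphi$;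 $\langle H,T\rangle\models\varphi\to\psi$ iff (i) $\langle H,T\rangle\not\models\varphi$ or $\langle H,T\rangle\models\psi$ and (ii) $\langle T,T\rangle\not\models\varphi$ or $\langle T,T\rangle\models\psi$; $\langle H,T\rangle=\!\!|\;\varphi\to\psi$ iff $\langle T,T\rangle\models\varphi$ and $\langle H,T\rangle=\!\!|\;\psi$. A formula is valid if satisfied by every ${\cal X}_5$-interpretation. A model of a theory satisfies all its formulas. $\langle T,T\rangle$ is an equilibrium model of $\Gamma$ if it is a model of $\Gamma$ and there is no model $\langle H,T\rangle$ of $\Gamma$ with $H\subsetneq T$. Formulas $\alpha,\beta$ are strongly equivalent on substitutions if for every formula $\varphi$, every atom $p$, and every theory $\Delta$, the theories $\Delta\cup\{\varphi[\alpha/p]\}$ and $\Delta\cup\{\varphi[\beta/p]\}$ have the same equilibrium models. *)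

theory Defs
  imports Main
begin

text \<open>Atoms are the elements of the type 'a (the fixed set At).\<close>

datatype 'a lit = Pos 'a | Neg 'a

definition consistent :: "'a lit set \<Rightarrow> bool" where
  "consistent S \<longleftrightarrow> (\<forall>p. \<not> (Pos p \<in> S \<and> Neg p \<in> S))"

datatype 'a form =
    Atom 'a
  | Bot
  | And "'a form" "'a form"
  | Or "'a form" "'a form"
  | Imp "'a form" "'a form"
  | SNeg "'a form"

definition Neg_f :: "'a form \<Rightarrow> 'a form" where
  "Neg_f \<phi> = Imp \<phi> Bot"

definition Top :: "'a form" where
  "Top = Neg_f Bot"

definition Iff :: "'a form \<Rightarrow> 'a form \<Rightarrow> 'a form" where
  "Iff \<phi> \<psi> = And (Imp \<phi> \<psi>) (Imp \<psi> \<phi>)"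

definition SIff :: "'a form \<Rightarrow> 'a form \<Rightarrow> 'a form" where
  "SIff \<phi> \<psi> = And (Iff \<phi> \<psi>) (Iff (SNeg \<phi>) (SNeg \<psi>))"

definition interp :: "'a lit set \<Rightarrow> 'a lit set \<Rightarrow> bool" where
  "interp H T \<longleftrightarrow> consistent H \<and> consistent T \<and> H \<subseteq> T"

fun sat :: "'a lit set \<Rightarrow> 'a lit set \<Rightarrow> 'a form \<Rightarrow> bool"
and fal :: "'a lit set \<Rightarrow> 'a lit set \<Rightarrow> 'a form \<Rightarrow> bool" where
  "sat H T Bot = False"
| "sat H T (Atom p) = (Pos p \<in> H)"
| "sat H T (And \<phi> \<psi>) = (sat H T \<phi> \<and> sat H T \<psi>)"
| "sat H T (Or \<phi> \<psi>) = (sat H T \<phi> \<or> sat H T \<psi>)"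
| "sat H T (SNeg \<phi>) = fal H T \<phi>"
| "sat H T (Imp \<phi> \<psi>) =
     ((\<not> sat H T \<phi> \<or> sat H T \<psi>) \<and> (\<not> sat T T \<phi> \<or> sat T T \<psi>))"
| "fal H T Bot = True"
| "fal H T (Atom p) = (Neg p \<in> H)"
| "fal H T (And \<phi> \<psi>) = (fal H T \<phi> \<or> fal H T \<psi>)"
| "fal H T (Or \<phi> \<psi>) = (fal H T \<phi> \<and> fal H T \<psi>)"
| "fal H T (SNeg \<phi>) = sat H T \<phi>"
| "fal H T (Imp \<phi> \<psi>) = (sat T T \<phi> \<and> fal H T \<psi>)"

definition valid :: "'a form \<Rightarrow> bool" where
  "valid \<phi> \<longleftrightarrow> (\<forall>H T. interp H T \<longrightarrow> sat H T \<phi>)"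

definition model :: "'a lit set \<Rightarrow> 'a lit set \<Rightarrow> 'a form set \<Rightarrow> bool" where
  "model H T \<Gamma> \<longleftrightarrow> interp H T \<and> (\<forall>\<phi>\<in>\<Gamma>. sat H T \<phi>)"

definition eq_model :: "'a lit set \<Rightarrow> 'a form set \<Rightarrow> bool" where
  "eq_model T \<Gamma> \<longleftrightarrow> model T T \<Gamma> \<and> \<not> (\<exists>H. H \<subset> T \<and> model H T \<Gamma>)"

fun subst :: "'a form \<Rightarrow> 'a form \<Rightarrow> 'a \<Rightarrow> 'a form" where
  "subst (Atom q) \<alpha> p = (if q = p then \<alpha> else Atom q)"
| "subst Bot \<alpha> p = Bot"
| "subst (And \<phi> \<psi>) \<alpha> p = And (subst \<phi> \<alpha> p) (subst \<psi> \<alpha> p)"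
| "subst (Or \<phi> \<psi>) \<alpha> p = Or (subst \<phi> \<alpha> p) (subst \<psi> \<alpha> p)"
| "subst (Imp \<phi> \<psi>) \<alpha> p = Imp (subst \<phi> \<alpha> p) (subst \<psi> \<alpha> p)"
| "subst (SNeg \<phi>) \<alpha> p = SNeg (subst \<phi> \<alpha> p)"

definition strongly_equiv_subst :: "'a form \<Rightarrow> 'a form \<Rightarrow> bool" where
  "strongly_equiv_subst \<alpha> \<beta> \<longleftrightarrow>
     (\<forall>\<phi> p \<Delta> T. eq_model T (\<Delta> \<union> {subst \<phi> \<alpha> p}) \<longleftrightarrow> eq_model T (\<Delta> \<union> {subst \<phi> \<beta> p}))"

end

theory Submission
  imports Defs
begin

fun litf :: "'a lit \<Rightarrow> 'a form" where
  "litf (Pos p) = Atom p"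
| "litf (Neg p) = SNeg (Atom p)"

lemma sat_litf[simp]: "sat H T (litf l) = (l \<in> H)"
  by (cases l) auto

lemma persist: "H \<subseteq> T \<Longrightarrow> (sat H T \<phi> \<longrightarrow> sat T T \<phi>) \<and> (fal H T \<phi> \<longrightarrow> fal T T \<phi>)"
  by (induct \<phi>) auto

lemma interpTT: "interp H T \<Longrightarrow> interp T T"
  by (simp add: interp_def)

lemma subst_eq:
  assumes e: "\<forall>H T. interp H T \<longrightarrow> sat H T \<alpha> = sat H T \<beta> \<and> fal H T \<alpha> = fal H T \<beta>"
  shows "interp H T \<Longrightarrow> sat H T (subst \<phi> \<alpha> p) = sat H T (subst \<phi> \<beta> p) \<and>
            fal H T (subst \<phi> \<alpha> p) = fal H T (subst \<phi> \<beta> p)"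
proof (induct \<phi> arbitrary: H T)
  case (Imp \<phi>1 \<phi>2)
  then show ?case using interpTT[OF Imp(3)] by auto
qed (use e in auto)

lemma distinguish:
  assumes i: "interp H T" and a: "sat H T A" and b: "\<not> sat H T B"
  shows "\<exists>\<Delta> T'. eq_model T' (\<Delta> \<union> {A}) \<noteq> eq_model T' (\<Delta> \<union> {B})"
proof -
  have sub: "H \<subseteq> T" using i by (simp add: interp_def)
  have iT: "interp T T" using interpTT[OF i] .
  have aT: "sat T T A" using persist[OF sub] a by blast
  show ?thesis
  proof (cases "sat T T B")
    case False
    let ?D = "litf ` T"
    have "eq_model T (?D \<union> {A})"
      unfolding eq_model_def model_def using iT aT by auto
    moreover have "\<not> eq_model T (?D \<union> {B})"
      unfolding eq_model_def model_def using False by auto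
    ultimately show ?thesis by blast
  next
    case True
    have ne: "H \<noteq> T" using True b by auto
    let ?D = "litf ` H \<union> {Imp (litf l) (litf l') | l l'. l \<in> T - H \<and> l' \<in> T - H}"
    have mT: "model T T (?D \<union> {B})"
      unfolding model_def using iT True sub by auto
    have mH: "model H T (?D \<union> {A})"
      unfolding model_def using i a by auto
    have "eq_model T (?D \<union> {B})"
      unfolding eq_model_def
    proof (intro conjI mT notI)
      assume "\<exists>H'. H' \<subset> T \<and> model H' T (?D \<union> {B})"
      then obtain H' where h1: "H' \<subset> T" and h2: "model H' T (?D \<union> {B})" by blast
      have hh: "H \<subseteq> H'"
      proof
        fix x assume "x \<in> H"
        then have "litf x \<in> ?D \<union> {B}" by blast
        then have "sat H' T (litf x)" using h2 unfolding model_def by blast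
        then show "x \<in> H'" by simp
      qed
      show False
      proof (cases "H' = H")
        case True
        then show False using h2 b unfolding model_def by auto
      next
        case False
        then obtain l where l: "l \<in> H'" "l \<notin> H" using hh by blast
        have lT: "l \<in> T" using l h1 by blast
        have "T \<subseteq> H'"
        proof
          fix l' assume l': "l' \<in> T"
          show "l' \<in> H'"
          proof (cases "l' \<in> H")
            case True then show ?thesis using hh by blast
          next
            case False
            have "Imp (litf l) (litf l') \<in> ?D" using lT l' l False by blast
            then have "sat H' T (Imp (litf l) (litf l'))" using h2 unfolding model_def by blast
            then show ?thesis using l by simp
          qed
        qed
        then show False using h1 by blast
      qed
    qed
    moreover have "\<not> eq_model T (?D \<union> {A})"
      unfolding eq_model_def using mH sub ne by blast
    ultimately show ?thesis by blast
  qed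
qed

theorem theorem10:
  fixes \<alpha> \<beta> :: "'a form"
  shows "strongly_equiv_subst \<alpha> \<beta> \<longleftrightarrow> valid (SIff \<alpha> \<beta>)"
proof
  assume v: "valid (SIff \<alpha> \<beta>)"
  have e: "\<forall>H T. interp H T \<longrightarrow> sat H T \<alpha> = sat H T \<beta> \<and> fal H T \<alpha> = fal H T \<beta>"
  proof (intro allI impI)
    fix H T :: "'a lit set" assume i: "interp H T"
    then show "sat H T \<alpha> = sat H T \<beta> \<and> fal H T \<alpha> = fal H T \<beta>"
      using v unfolding valid_def SIff_def Iff_def by auto
  qed
  have "\<And>\<phi> p H T. model H T ({subst \<phi> \<alpha> p}) = model H T ({subst \<phi> \<beta> p})"
    unfolding model_def using subst_eq[OF e] by auto
  then have "\<And>\<phi> p H T \<Delta>. model H T (\<Delta> \<union> {subst \<phi> \<alpha> p}) = model H T (\<Delta> \<union> {subst \<phi> \<beta> p})"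
    unfolding model_def by auto
  then show "strongly_equiv_subst \<alpha> \<beta>"
    unfolding strongly_equiv_subst_def eq_model_def by simp
next
  assume s: "strongly_equiv_subst \<alpha> \<beta>"
  show "valid (SIff \<alpha> \<beta>)"
  proof (rule ccontr)
    assume "\<not> valid (SIff \<alpha> \<beta>)"
    then have "\<not> (\<forall>H T. interp H T \<longrightarrow> sat H T \<alpha> = sat H T \<beta> \<and> fal H T \<alpha> = fal H T \<beta>)"
      unfolding valid_def SIff_def Iff_def using interpTT by fastforce
    then obtain H T where i: "interp H T" and d: "sat H T \<alpha> \<noteq> sat H T \<beta> \<or> fal H T \<alpha> \<noteq> fal H T \<beta>"
      by blast
    obtain p :: 'a where True by blast
    obtain \<gamma> where g: "sat H T (subst \<gamma> \<alpha> p) \<noteq> sat H T (subst \<gamma> \<beta> p)"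
    proof (cases "sat H T \<alpha> \<noteq> sat H T \<beta>")
      case True
      then show ?thesis using that[of "Atom p"] by simp
    next
      case False
      then show ?thesis using d that[of "SNeg (Atom p)"] by simp
    qed
    have "\<exists>\<Delta> T'. eq_model T' (\<Delta> \<union> {subst \<gamma> \<alpha> p}) \<noteq> eq_model T' (\<Delta> \<union> {subst \<gamma> \<beta> p})"
    proof (cases "sat H T (subst \<gamma> \<alpha> p)")
      case True
      then show ?thesis using distinguish[OF i] g by blast
    next
      case False
      then show ?thesis using distinguish[OF i, of "subst \<gamma> \<beta> p" "subst \<gamma> \<alpha> p"] g by metis
    qed
    then show False using s unfolding strongly_equiv_subst_def by blast
  qed
qed

end
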